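(* Let $p$ be an odd prime, let $M,S$ be integers with $0\leq S<M$, and let $\zeta$ be a primitive $p^M$-th root of unity. Then for every integer $k$ with $(k,p)=1$ and $0\leq k<p^S$, $$\sum_{i=0}^{p^S-1}\zeta^{(1+kp^{M-S})^i}=0.$$ *)

theory Defs
  imports Complex_Main "HOL-Computational_Algebra.Primes"
begin

definition primitive_root_of_unity :: "nat \<Rightarrow> complex \<Rightarrow> bool" where
  "primitive_root_of_unity n z \<longleftrightarrow> 0 < n \<and> z ^ n = 1 \<and> (\<forall>j. 0 < j \<and> j < n \<longrightarrow> z ^ j \<noteq> 1)"

end

theory Submission
  imports Defs "HOL-Number_Theory.Number_Theory"
begin

lemma two_sum_less: "2 * (\<Sum>j<n. j) = n * (n - 1)" for n :: nat
proof (induction n)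
  case (Suc n) thus ?case by (cases n) (simp_all add: algebra_simps)
qed simp

lemma geom_nat: "(1 + y) ^ n = 1 + y * (\<Sum>j<n. (1 + y) ^ j)" for y :: nat
  by (induction n) (simp_all add: algebra_simps)

lemma cop1: "coprime (1 + X * p) (p::nat)"
proof -
  have "gcd p (X * p + 1) = gcd p 1" by (rule gcd_add_mult)
  then have "gcd p (X * p + 1) = 1" by (simp only: gcd_1_nat)
  then have "coprime p (X * p + 1)" by (simp only: coprime_iff_gcd_eq_1)
  then have "coprime (X * p + 1) p" by (rule coprime_commute[THEN iffD1])
  then show ?thesis by (simp only: add.commute)
qed

lemma pow_expand:
  fixes p u c :: nat
  shows "\<exists>r. (1 + c * (p * u)) ^ j = 1 + j * c * (p * u) + p^2 * r"
proof (induction j)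
  case 0 then show ?case by simp
next
  case (Suc j)
  then obtain r where r: "(1 + c * (p * u)) ^ j = 1 + j * c * (p * u) + p^2 * r" by blast
  have "(1 + c * (p * u)) ^ Suc j = (1 + c * (p * u)) * (1 + j * c * (p * u) + p^2 * r)" using r by simp
  also have "\<dots> = 1 + Suc j * c * (p * u) + p^2 * (j * c * c * u * u + r + c * p * u * r)"
    by (simp add: algebra_simps power2_eq_square)
  finally have "(1 + c * (p * u)) ^ Suc j = 1 + Suc j * c * (p * u) + p^2 * (j * c * c * u * u + r + c * p * u * r)" .
  then show ?case by (intro exI)
qed

lemma step:
  fixes p m c :: nat assumes "prime p" "odd p" "m \<ge> 1"
  shows "\<exists>c'. (1 + c * p ^ m) ^ p = 1 + c' * p ^ (m + 1) \<and> (coprime c' p \<longleftrightarrow> coprime c p)"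
proof -
  define u where "u = p ^ (m - 1)"
  have pm: "p ^ m = p * u" unfolding u_def using assms(3) by (cases m) auto
  have pm1: "p ^ (m + 1) = p * p * u" using pm by simp
  define x where "x = 1 + c * (p * u)"
  have "\<forall>j. \<exists>r. x ^ j = 1 + j * c * (p * u) + p^2 * r"
    unfolding x_def using pow_expand[of c p u] by (intro allI)
  then have "\<exists>r. \<forall>j. x ^ j = 1 + j * c * (p * u) + p^2 * r j" by (rule choice)
  then obtain r where r: "\<And>j. x ^ j = 1 + j * c * (p * u) + p^2 * r j" by blast
  obtain h where h: "p = 2 * h + 1" using assms(2) oddE by blast
  have sj: "(\<Sum>j<p. j) = p * h" using two_sum_less[of p] h by simp
  have "(\<Sum>j<p. x ^ j) = (\<Sum>j<p. 1 + j * (c * (p * u)) + p^2 * r j)"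
    by (rule sum.cong) (simp_all only: r mult.assoc)
  also have "\<dots> = (\<Sum>j<p. 1) + (\<Sum>j<p. j * (c * (p * u))) + (\<Sum>j<p. p^2 * r j)"
    by (simp only: sum.distrib)
  also have "\<dots> = p + (\<Sum>j<p. j) * (c * (p * u)) + p^2 * (\<Sum>j<p. r j)"
    by (simp add: sum_distrib_left sum_distrib_right)
  also have "\<dots> = p * (1 + p * (h * c * u + (\<Sum>j<p. r j)))"
    unfolding sj by (simp add: algebra_simps power2_eq_square)
  finally have s: "(\<Sum>j<p. x ^ j) = p * (1 + p * (h * c * u + (\<Sum>j<p. r j)))" .
  define R where "R = h * c * u + (\<Sum>j<p. r j)"
  have "x ^ p = 1 + (c * (p * u)) * (\<Sum>j<p. x ^ j)" unfolding x_def by (rule geom_nat)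
  also have "\<dots> = 1 + (c * (1 + p * R)) * (p * p * u)"
    unfolding s R_def[symmetric] by (simp add: algebra_simps)
  finally have e: "(1 + c * p ^ m) ^ p = 1 + (c * (1 + p * R)) * p ^ (m + 1)"
    unfolding pm1 x_def pm .
  have "coprime (1 + p * R) p"
    using cop1[of R p] by (simp only: mult.commute)
  then have "coprime (c * (1 + p * R)) p \<longleftrightarrow> coprime c p" by (simp only: coprime_mult_left_iff simp_thms)
  with e show ?thesis by (intro exI[of _ "c * (1 + p * R)"] conjI)
qed

lemma iter:
  fixes p m k :: nat assumes "prime p" "odd p" "m \<ge> 1" "coprime k p"
  shows "\<exists>c. (1 + k * p ^ m) ^ (p ^ t) = 1 + c * p ^ (m + t) \<and> coprime c p"
proof (induction t)
  case 0 then show ?case using assms by auto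
next
  case (Suc t)
  then obtain c where c: "(1 + k * p ^ m) ^ (p ^ t) = 1 + c * p ^ (m + t)" "coprime c p" by blast
  obtain c' where c': "(1 + c * p ^ (m + t)) ^ p = 1 + c' * p ^ (m + t + 1)" "coprime c' p = coprime c p"
    using step[OF assms(1,2), of "m + t" c] assms(3) by auto
  have "(1 + k * p ^ m) ^ (p ^ Suc t) = ((1 + k * p ^ m) ^ (p ^ t)) ^ p"
    by (simp add: power_mult[symmetric] mult.commute)
  also have "\<dots> = 1 + c' * p ^ (m + Suc t)" using c c' by simp
  finally show ?case using c c' by (intro exI[of _ c'] conjI) simp_all
qed

lemma zeta_mod:
  assumes "\<zeta> ^ N = (1::complex)" shows "\<zeta> ^ x = \<zeta> ^ (x mod N)"
proof -
  have "\<zeta> ^ x = \<zeta> ^ (N * (x div N) + x mod N)" by (simp only: mult_div_mod_eq)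
  also have "\<dots> = \<zeta> ^ (x mod N)" by (simp only: power_add power_mult assms power_one mult_1)
  finally show ?thesis .
qed

theorem lemma5p1:
  fixes p M S k :: nat and \<zeta> :: complex
  assumes "prime p" and "odd p"
    and "S < M"
    and "primitive_root_of_unity (p ^ M) \<zeta>"
    and "coprime k p" and "k < p ^ S"
  shows "(\<Sum>i = 0..p ^ S - 1. \<zeta> ^ ((1 + k * p ^ (M - S)) ^ i)) = 0"
proof -
  define q where "q = p ^ (M - S)"
  define N where "N = p ^ M"
  define n where "n = p ^ S"
  define a where "a = 1 + k * q"
  have p1: "p > 1" using assms(1) prime_gt_1_nat by blast
  have S1: "S \<ge> 1"
  proof (rule ccontr)
    assume "\<not> S \<ge> 1"
    then have "S = 0" by simp
    then have "k = 0" using assms(6) by simp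
    then show False using assms(1,5) by simp
  qed
  have Nqn: "N = q * n" unfolding N_def q_def n_def using assms(3) by (simp add: power_add[symmetric])
  have q1: "q > 1" unfolding q_def using one_less_power[OF p1, of "M - S"] assms(3) by simp
  have n0: "n > 0" unfolding n_def using p1 by simp
  have zN: "\<zeta> ^ N = 1" and zprim: "\<And>j. 0 < j \<Longrightarrow> j < N \<Longrightarrow> \<zeta> ^ j \<noteq> 1"
    using assms(4) unfolding primitive_root_of_unity_def N_def by auto
  have ga: "\<exists>c. a ^ (p ^ t) = 1 + c * p ^ (M - S + t) \<and> coprime c p" for t
    unfolding a_def q_def using iter[OF assms(1,2) _ assms(5), of "M - S" t] assms(3) by simp
  have coprN: "coprime N a"
  proof -
    have "q = p * p ^ (M - S - 1)" unfolding q_def using assms(3)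
      by (cases "M - S") auto
    then have "a = 1 + (k * p ^ (M - S - 1)) * p" unfolding a_def by simp
    then have "coprime a p" using cop1 by simp
    then show ?thesis unfolding N_def by (simp add: coprime_commute)
  qed
  have an: "[a ^ n = 1] (mod N)"
  proof -
    obtain c where "a ^ (p ^ S) = 1 + c * p ^ (M - S + S)" using ga by blast
    then have e: "a ^ n = 1 + c * N" unfolding n_def N_def using assms(3) by simp
    have "[1 + c * N = 1] (mod N)" unfolding cong_def by (rule mod_mult_self1)
    then show ?thesis unfolding e .
  qed
  have an1: "\<not> [a ^ (p ^ (S - 1)) = 1] (mod N)"
  proof
    assume h: "[a ^ (p ^ (S - 1)) = 1] (mod N)"
    obtain c where c: "a ^ (p ^ (S - 1)) = 1 + c * p ^ (M - S + (S - 1))" "coprime c p" using ga by blast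
    define P where "P = p ^ (M - 1)"
    have "M - S + (S - 1) = M - 1" using S1 assms(3) by simp
    then have c1: "a ^ (p ^ (S - 1)) = 1 + c * P" using c(1) P_def by simp
    have NP: "N = P * p" unfolding N_def P_def using assms(3) power_minus_mult[of M p] by simp
    have "[1 + c * P = 1] (mod P * p)" using h unfolding c1 NP .
    then have "P * p dvd (1 + c * P) - 1" using cong_altdef_nat[of 1 "1 + c * P" "P * p"] by simp
    moreover have "(1 + c * P) - 1 = P * c" by simp
    ultimately have "P * p dvd P * c" by simp
    moreover have "P > 0" unfolding P_def using p1 by simp
    ultimately have "p dvd c" using nat_mult_dvd_cancel1 by blast
    then have "is_unit p" using coprime_absorb_left[OF \<open>p dvd c\<close>] c(2) by (simp add: coprime_commute)
    then show False using p1 by simp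
  qed
  have ordN: "ord N a = n"
  proof -
    have "ord N a dvd p ^ S" using an ord_divides unfolding n_def by blast
    then obtain t where t: "t \<le> S" "ord N a = p ^ t" using divides_primepow_nat[OF assms(1)] by blast
    show ?thesis
    proof (cases "t = S")
      case True then show ?thesis using t n_def by simp
    next
      case False
      then have "ord N a dvd p ^ (S - 1)" using t by (simp add: le_imp_power_dvd)
      then show ?thesis using an1 ord_divides by blast
    qed
  qed
  define g where "g i = a ^ i mod N" for i
  define I where "I = {0..n-1}"
  define T where "T = (\<lambda>j. 1 + j * q) ` {..<n}"
  have inj: "inj_on g I"
  proof (rule inj_onI)
    fix i j assume ij: "i \<in> I" "j \<in> I" "g i = g j"
    show "i = j"
    proof (rule ccontr)
      assume "i \<noteq> j"
      have key: "False" if "i' < j'" "j' < n" "g i' = g j'" for i' j'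
      proof -
        have "[a ^ i' * a ^ (j' - i') = a ^ i' * 1] (mod N)"
          using that unfolding g_def cong_def by (simp add: power_add[symmetric])
        moreover have "coprime (a ^ i') N" using coprN by (simp add: coprime_commute)
        ultimately have "[a ^ (j' - i') = 1] (mod N)"
          using cong_mult_lcancel_nat by blast
        then have "n dvd j' - i'" using ordN ord_divides by blast
        moreover have "0 < j' - i'" "j' - i' < n" using that by auto
        ultimately show False by (simp add: nat_dvd_not_less)
      qed
      have "i < n" "j < n" using ij n0 unfolding I_def by auto
      then show False
      proof (cases "i < j")
        case True then show False using key[of i j] \<open>j < n\<close> ij(3) by simp
      next
        case False then have "j < i" using \<open>i \<noteq> j\<close> by simp
        then show False using key[of j i] \<open>i < n\<close> ij(3) by simp
      qed
    qed
  qed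
  have sub: "g ` I \<subseteq> T"
  proof
    fix y assume "y \<in> g ` I"
    then obtain i where y: "y = a ^ i mod N" unfolding g_def by blast
    have "[a = 1] (mod q)" unfolding a_def cong_def by (rule mod_mult_self1)
    then have "[a ^ i = 1] (mod q)" using cong_pow[of a 1 q i] by simp
    moreover have "[y = a ^ i] (mod q)" unfolding y Nqn cong_def by (simp add: mod_mod_cancel)
    ultimately have "[y = 1] (mod q)" using cong_trans by blast
    then have ym: "y mod q = 1" using q1 by (simp add: cong_def)
    have "y < N" unfolding y using Nqn q1 n0 by simp
    then have "y div q < n" unfolding Nqn by (intro less_mult_imp_div_less) (simp add: mult.commute)
    moreover have "y = 1 + (y div q) * q" using div_mult_mod_eq[of y q] ym by simp
    ultimately show "y \<in> T" unfolding T_def by (intro image_eqI[of _ _ "y div q"]) auto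
  qed
  have injT: "inj_on (\<lambda>j. 1 + j * q) {..<n}" using q1 by (auto simp: inj_on_def)
  have cardT: "card T = n" unfolding T_def using card_image[OF injT] by simp
  have cardI: "card (g ` I) = n" using card_image[OF inj] n0 unfolding I_def by simp
  have gI: "g ` I = T" using card_subset_eq[OF _ sub] cardT cardI T_def by simp
  have "(\<Sum>i = 0..p ^ S - 1. \<zeta> ^ ((1 + k * p ^ (M - S)) ^ i)) = (\<Sum>i\<in>I. \<zeta> ^ g i)"
    unfolding I_def n_def g_def a_def q_def by (rule sum.cong) (rule refl, rule zeta_mod[OF zN])
  also have "\<dots> = (\<Sum>y\<in>g ` I. \<zeta> ^ y)" using sum.reindex[OF inj, of "\<lambda>y. \<zeta> ^ y"] by (simp add: comp_def)
  also have "\<dots> = (\<Sum>j<n. \<zeta> ^ (1 + j * q))" unfolding gI T_def using sum.reindex[OF injT, of "\<lambda>y. \<zeta> ^ y"] by (simp add: comp_def)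
  also have "\<dots> = \<zeta> * (\<Sum>j<n. (\<zeta> ^ q) ^ j)"
    unfolding sum_distrib_left by (rule sum.cong) (simp_all add: power_add power_mult[symmetric] mult.commute)
  also have "\<dots> = 0"
  proof -
    have "n > 1" unfolding n_def using one_less_power[OF p1, of S] S1 by simp
    then have "q < N" unfolding Nqn using q1 by simp
    then have "\<zeta> ^ q \<noteq> 1" using zprim[of q] q1 by simp
    moreover have "(\<zeta> ^ q) ^ n = 1" using zN Nqn by (simp add: power_mult)
    ultimately show ?thesis by (simp add: geometric_sum)
  qed
  finally show ?thesis .
qed

end
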